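(* Let $V\colon[-1,1]\to[0,1]$ be a smooth function with $V(-1)=V(1)=1$ and $V(0)=0$, strictly decreasing on $[-1,0]$ and strictly increasing on $[0,1]$. Let $$T^*S^2=\{(x,y,z,u,v,w)\in\mathbb{R}^6 \mid x^2+y^2+z^2=1,\ xu+yv+zw=0\},$$ and define $F=(J,H)\colon T^*S^2\to\mathbb{R}^2$ by $$J=xv-yu,\qquad H=\tfrac12(u^2+v^2+w^2)+V(z).$$ Then the image of $F$ is the epigraph $$F(T^*S^2)=\Big\{(j,h)\in\mathbb{R}^2 \;\Big|\; j\in\mathbb{R},\ h\ge \tfrac{j^2}{2}\Big\},$$ and for every $j\in\mathbb{R}$ the fiber $F^{-1}\big(j,\tfrac{j^2}{2}\big)$ is a circle.
   Context: $T^*S^2$ is realized as a submanifold of $T^*\mathbb{R}^3\cong\mathbb{R}^6$ with position coordinates $(x,y,z)$ and momentum coordinates $(u,v,w)$; $J$ is the angular momentum about the $z$-axis and $H$ is the mechanical energy of the spherical pendulum with potential $V$. *)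

theory Defs
  imports "HOL-Analysis.Analysis"
begin

definition smooth_on_real :: "real set \<Rightarrow> (real \<Rightarrow> real) \<Rightarrow> bool" where
  "smooth_on_real S f \<longleftrightarrow>
     (\<exists>D :: nat \<Rightarrow> real \<Rightarrow> real. (\<forall>x\<in>S. D 0 x = f x) \<and>
        (\<forall>n. \<forall>x\<in>S. (D n has_real_derivative D (Suc n) x) (at x within S)))"

definition TstarS2 :: "(real \<times> real \<times> real \<times> real \<times> real \<times> real) set" where
  "TstarS2 = {(x,y,z,u,v,w). x^2 + y^2 + z^2 = 1 \<and> x * u + y * v + z * w = 0}"

definition momentum_map :: "(real \<Rightarrow> real) \<Rightarrow> real \<times> real \<times> real \<times> real \<times> real \<times> real \<Rightarrow> real \<times> real" where
  "momentum_map V = (\<lambda>(x,y,z,u,v,w). (x * v - y * u, (u^2 + v^2 + w^2)/2 + V z))"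

end

theory Submission
  imports Defs
begin

lemma key_ineq:
  fixes x y z u v w :: real
  assumes "x^2+y^2+z^2 = 1"
  shows "(x * v - y * u)^2 \<le> u^2+v^2"
proof -
  have "(x * v - y * u)^2 + (x * u+y * v)^2 = (x^2+y^2) * (u^2+v^2)" by algebra
  moreover have "(x^2+y^2) * (u^2+v^2) \<le> 1 * (u^2+v^2)"
    by (rule mult_right_mono) (use assms in \<open>smt (verit) zero_le_power2\<close>)+
  ultimately show ?thesis by (smt (verit) zero_le_power2)
qed

theorem mainTheorem1:
  fixes V :: "real \<Rightarrow> real"
  assumes "smooth_on_real {-1..1} V"
    and "V ` {-1..1} \<subseteq> {0..1}"
    and "V (-1) = 1" and "V 1 = 1" and "V 0 = 0"
    and "strict_antimono_on {-1..0} V"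
    and "strict_mono_on {0..1} V"
  shows "momentum_map V ` TstarS2 = {(j,h). h \<ge> j^2/2}
    \<and> (\<forall>j::real. (momentum_map V -` {(j, j^2/2)} \<inter> TstarS2) homeomorphic sphere (0::complex) 1)"
proof -
  have zb: "z \<in> {-1..1}" if "x^2+y^2+z^2 = (1::real)" for x y z
  proof -
    have "z^2 \<le> 1" using that by (smt (verit) zero_le_power2)
    then have "\<bar>z\<bar> \<le> 1" by (simp add: abs_square_le_1)
    then show ?thesis by auto
  qed
  have Vpos: "V z \<ge> 0" if "x^2+y^2+z^2 = (1::real)" for x y z
    using zb[OF that] assms(2) by (meson atLeastAtMost_iff image_subset_iff)
  have Vzero: "z = 0" if "z \<in> {-1..1}" "V z = 0" for z
  proof (rule ccontr)
    assume "z \<noteq> 0"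
    then consider "z < 0" | "z > 0" by linarith
    then show False
    proof cases
      case 1
      then have "V z > V 0" using assms(6) that(1)
        unfolding monotone_on_def by auto
      then show False using that assms(5) by simp
    next
      case 2
      then have "V z > V 0" using assms(7) that(1)
        unfolding monotone_on_def by auto
      then show False using that assms(5) by simp
    qed
  qed
  have part1: "momentum_map V ` TstarS2 = {(j,h). h \<ge> j^2/2}"
  proof
    show "momentum_map V ` TstarS2 \<subseteq> {(j,h). h \<ge> j^2/2}"
    proof (rule subsetI)
      fix p assume "p \<in> momentum_map V ` TstarS2"
      then obtain q where q: "q \<in> TstarS2" "p = momentum_map V q" by blast
      obtain x y z u v w where qq: "q = (x,y,z,u,v,w)" by (cases q) auto
      have "(x,y,z,u,v,w) \<in> TstarS2" using q qq by simp
      then have s: "x^2+y^2+z^2 = 1" by (simp add: TstarS2_def)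
      have "(x * v-y * u)^2 \<le> u^2+v^2" by (rule key_ineq[OF s])
      moreover have "V z \<ge> 0" by (rule Vpos[OF s])
      moreover have "w^2 \<ge> 0" by simp
      ultimately have "(x * v - y * u)^2 \<le> (u^2+v^2+w^2) + 2 * V z" by linarith
      then have "(x * v - y * u)^2/2 \<le> (u^2+v^2+w^2)/2 + V z" by (simp add: field_simps)
      then show "p \<in> {(j,h). h \<ge> j^2/2}"
        using q qq by (simp add: momentum_map_def)
    qed
  next
    show "{(j,h). h \<ge> j^2/2} \<subseteq> momentum_map V ` TstarS2"
    proof clarify
      fix j h :: real
      assume h: "j^2/2 \<le> h"
      define w where "w = sqrt (2 * h - j^2)"
      have w2: "w^2 = 2 * h - j^2" unfolding w_def using h by simp
      have "(1,0,0,0,j,w) \<in> TstarS2" by (simp add: TstarS2_def)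
      moreover have "momentum_map V (1,0,0,0,j,w) = (j,h)"
        using w2 assms(5) by (simp add: momentum_map_def)
      ultimately show "(j,h) \<in> momentum_map V ` TstarS2" by (metis image_eqI)
    qed
  qed
  have part2: "(momentum_map V -` {(j, j^2/2)} \<inter> TstarS2) homeomorphic sphere (0::complex) 1" for j
  proof -
    define f where "f = (\<lambda>c::complex. (Re c, Im c, 0::real, - j * Im c, j * Re c, 0::real))"
    have "sphere (0::complex) 1 homeomorphic f ` sphere 0 1"
    proof (rule homeomorphic_compact)
      show "continuous_on (sphere 0 1) f" unfolding f_def
        by (intro continuous_intros)
      show "inj_on f (sphere 0 1)" unfolding f_def inj_on_def
        by (auto simp: complex_eq_iff)
    qed auto
    moreover have "f ` sphere 0 1 = momentum_map V -` {(j, j^2/2)} \<inter> TstarS2"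
    proof
      show "f ` sphere 0 1 \<subseteq> momentum_map V -` {(j, j^2/2)} \<inter> TstarS2"
      proof (rule image_subsetI)
        fix c :: complex assume "c \<in> sphere 0 1"
        then have n: "(Re c)^2 + (Im c)^2 = 1"
          by (simp add: cmod_def)
        have a: "Re c * (j * Re c) - Im c * (- j * Im c) = j * ((Re c)^2 + (Im c)^2)"
          by algebra
        have b: "(- j * Im c)^2 + (j * Re c)^2 = j^2 * ((Re c)^2 + (Im c)^2)"
          by algebra
        have c: "Re c * (- j * Im c) + Im c * (j * Re c) = 0" by algebra
        have "momentum_map V (f c) = (Re c * (j * Re c) - Im c * (- j * Im c), ((- j * Im c)^2 + (j * Re c)^2 + 0^2)/2 + V 0)"
          by (simp add: f_def momentum_map_def)
        also have "\<dots> = (j, j^2/2)" using a b n assms(5) by simp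
        finally have m: "momentum_map V (f c) = (j, j^2/2)" .
        have t: "f c \<in> TstarS2" using n c by (simp add: f_def TstarS2_def)
        show "f c \<in> momentum_map V -` {(j, j^2/2)} \<inter> TstarS2"
          using m t by simp
      qed
    next
      show "momentum_map V -` {(j, j^2/2)} \<inter> TstarS2 \<subseteq> f ` sphere 0 1"
      proof (rule subsetI)
        fix q assume qin: "q \<in> momentum_map V -` {(j, j^2/2)} \<inter> TstarS2"
        obtain x y z u v w where qq: "q = (x,y,z,u,v,w)" by (cases q) auto
        have m: "(x,y,z,u,v,w) \<in> momentum_map V -` {(j, j^2/2)}"
          and t: "(x,y,z,u,v,w) \<in> TstarS2" using qin qq by auto
        have s: "x^2+y^2+z^2 = 1" and o: "x * u+y * v+z * w = 0" using t by (auto simp: TstarS2_def)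
        have J: "x * v-y * u = j" and H: "(u^2+v^2+w^2)/2 + V z = j^2/2"
          using m by (auto simp: momentum_map_def)
        have k: "(x * v - y * u)^2 \<le> u^2+v^2" by (rule key_ineq[OF s])
        have vp: "V z \<ge> 0" by (rule Vpos[OF s])
        have H': "u^2+v^2+w^2 + 2 * V z = j^2" using H by (simp add: field_simps)
        have k': "j^2 \<le> u^2+v^2" using k J by simp
        have w2: "w^2 \<ge> 0" by simp
        have "V z = 0" using H' k' vp w2 by linarith
        then have z0: "z = 0" using Vzero zb[OF s] by blast
        have "w^2 = 0" using H' k' vp w2 by linarith
        then have w0: "w = 0" by simp
        have s2: "x^2+y^2 = 1" using s z0 by simp
        have eq: "u^2+v^2 = j^2" using H' k' vp w2 by linarith
        have yx: "y * u - x * v = -j" using J by simp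
        have uv: "u = -j * y \<and> v = j * x"
        proof -
          have "(u + j * y)^2 + (v - j * x)^2 = (u^2+v^2) + j^2 * (x^2+y^2) + 2 * j * (y * u - x * v)"
            by algebra
          also have "\<dots> = j^2 + j^2 * 1 + 2 * j * (-j)" by (simp only: eq s2 yx)
          also have "\<dots> = 0" by (simp add: power2_eq_square)
          finally have "(u + j * y)^2 + (v - j * x)^2 = 0" .
          then have "u + j * y = 0" "v - j * x = 0" by (simp_all add: sum_power2_eq_zero_iff)
          then show ?thesis by auto
        qed
        have "Complex x y \<in> sphere 0 1" using s2 by (simp add: cmod_def)
        moreover have "f (Complex x y) = (x,y,z,u,v,w)" unfolding f_def using uv z0 w0 by simp
        ultimately show "q \<in> f ` sphere 0 1" unfolding qq by (metis image_eqI)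
      qed
    qed
    ultimately show ?thesis by (metis homeomorphic_sym)
  qed
  show ?thesis using part1 part2 by blast
qed

end
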